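(* For every $L$, every $\eta\in\Omega_{\bar\rho^{(L)}}$ and every $u\in\mathcal T_L$, $$\epsilon(u,\eta)=\frac12\Big[F(u+\hat e_3,\eta)-F(u,\eta)+\Delta H_\eta(u)\Big],$$ where $\Delta H_\eta(u)=\sum_{i=1}^2\big[H_\eta(u+\hat e_i)+H_\eta(u-\hat e_i)\big]-4H_\eta(u)$.
   Context: Let $\mathcal T$ be the triangular lattice with vertex set $\mathbb Z^2$, where $u$ is adjacent to $u\pm\hat e_i$, $i=1,2,3$, $\hat e_1=(1,0)$, $\hat e_2=(0,1)$, $\hat e_3=(-1,-1)$, and $\mathcal H$ its dual honeycomb lattice (vertices of $\mathcal T$ = hexagonal faces of $\mathcal H$). For $u\in\mathcal T$, $i\in\{1,2,3\}$, $b_i(u)$ is the edge of $\mathcal H$ crossed by the edge of $\mathcal T$ from $u$ to $u+\hat e_i$ (type-$i$ edge). $\mathcal H_L,\mathcal T_L$ are the quotients by $L\mathbb Z^2$. $\mathbb T$ is the open triangle with vertices $(0,0),(1,0),(0,1)$. For $\bar\rho^{(L)}\in\mathbb T$ with $L\bar\rho^{(L)}_i\in\mathbb N$, $\Omega_{\bar\rho^{(L)}}$ is the set of perfect matchings (dimer coverings) $\eta$ of $\mathcal H_L$ with exactly $L^2\bar\rho^{(L)}_i$ dimers of type $i$, $i=1,2$; $\bar\rho^{(L)}_3=1-\bar\rho^{(L)}_1-\bar\rho^{(L)}_2$. The height function $H_\eta$ on $\mathcal T_L$: $H_\eta(0,0)=0$, $H_\eta(u+\hat e_i)-H_\eta(u)=-\bar\rho^{(L)}_i+\mathbf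 1_{b_i(u)\in\eta}$, $i=1,2,3$. Define $\epsilon(u,\eta)=\mathbf 1_{\{b_1(u),b_2(u)\}\subset\eta}-\mathbf 1_{\{b_1(u-\hat e_1),b_2(u-\hat e_2)\}\subset\eta}\in\{-1,0,1\}$ and $F(u,\eta)=|\mathbf 1_{b_1(u)\in\eta}-\mathbf 1_{b_2(u)\in\eta}|$. *)

theory Defs
  imports Complex_Main "HOL-Library.Product_Plus"
begin

text \<open>Vertices of the triangular lattice T are points of int x int.
  The honeycomb edge b_i(u) of H_L is encoded as the pair (u mod L, i);
  a dimer configuration eta is a set of such pairs.\<close>

definition e :: "nat \<Rightarrow> int \<times> int" where
  "e i = (if i = 1 then (1, 0) else if i = 2 then (0, 1) else (-1, -1))"

definition red :: "int \<Rightarrow> int \<times> int \<Rightarrow> int \<times> int" where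
  "red L u = (fst u mod L, snd u mod L)"

definition inD :: "int \<Rightarrow> ((int \<times> int) \<times> nat) set \<Rightarrow> int \<times> int \<Rightarrow> nat \<Rightarrow> bool" where
  "inD L \<eta> u i \<longleftrightarrow> (red L u, i) \<in> \<eta>"

definition rho :: "real \<Rightarrow> real \<Rightarrow> nat \<Rightarrow> real" where
  "rho r1 r2 i = (if i = 1 then r1 else if i = 2 then r2 else 1 - r1 - r2)"

text \<open>Omega: perfect matchings of H_L with L^2 r1 dimers of type 1 and L^2 r2 of type 2.
  The vertices of H_L are the triangles A(u) = {u, u+e1, u+e1+e2} and
  B(u) = {u, u+e2, u+e1+e2} of T_L; the H-edges incident to A(u) are
  b_1(u), b_2(u+e1), b_3(u+e1+e2), those incident to B(u) are
  b_2(u), b_1(u+e2), b_3(u+e1+e2). Perfect matching = each triangle meets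
  exactly one dimer.\<close>
definition Omega :: "int \<Rightarrow> real \<Rightarrow> real \<Rightarrow> ((int \<times> int) \<times> nat) set set" where
  "Omega L r1 r2 = {\<eta>. \<eta> \<subseteq> ({0..<L} \<times> {0..<L}) \<times> {1, 2, 3} \<and>
     (\<forall>u \<in> {0..<L} \<times> {0..<L}.
        of_bool (inD L \<eta> u 1) + of_bool (inD L \<eta> (u + e 1) 2)
          + of_bool (inD L \<eta> (u + e 1 + e 2) 3) = (1::nat) \<and>
        of_bool (inD L \<eta> u 2) + of_bool (inD L \<eta> (u + e 2) 1)
          + of_bool (inD L \<eta> (u + e 1 + e 2) 3) = (1::nat)) \<and>
     real (card {u. (u, 1) \<in> \<eta>}) = (real_of_int L)^2 * r1 \<and>
     real (card {u. (u, 2) \<in> \<eta>}) = (real_of_int L)^2 * r2}"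

definition height :: "int \<Rightarrow> real \<Rightarrow> real \<Rightarrow> ((int \<times> int) \<times> nat) set \<Rightarrow> int \<times> int \<Rightarrow> real" where
  "height L r1 r2 \<eta> = (THE H. H (0, 0) = 0 \<and>
     (\<forall>u i. i \<in> {1, 2, 3} \<longrightarrow>
        H (u + e i) - H u = - rho r1 r2 i + of_bool (inD L \<eta> u i)))"

definition eps :: "int \<Rightarrow> ((int \<times> int) \<times> nat) set \<Rightarrow> int \<times> int \<Rightarrow> real" where
  "eps L \<eta> u = of_bool (inD L \<eta> u 1 \<and> inD L \<eta> u 2)
     - of_bool (inD L \<eta> (u - e 1) 1 \<and> inD L \<eta> (u - e 2) 2)"

definition Ffun :: "int \<Rightarrow> ((int \<times> int) \<times> nat) set \<Rightarrow> int \<times> int \<Rightarrow> real" where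
  "Ffun L \<eta> u = \<bar>of_bool (inD L \<eta> u 1) - of_bool (inD L \<eta> u 2)\<bar>"

definition lap :: "(int \<times> int \<Rightarrow> real) \<Rightarrow> int \<times> int \<Rightarrow> real" where
  "lap H u = (\<Sum>i\<in>{1, 2::nat}. H (u + e i) + H (u - e i)) - 4 * H u"

end

theory Submission
  imports Defs
begin

definition P :: "(int \<Rightarrow> real) \<Rightarrow> int \<Rightarrow> real" where
  "P g a = (if a \<ge> 0 then sum g {0..<a} else - sum g {a..<0})"

lemma P_step: "P g (a + 1) - P g a = g a"
proof (cases "a \<ge> 0")
  case True
  have "{0..<a+1} = insert a {0..<a}" using True by auto
  then show ?thesis using True by (simp add: P_def)
next
  case False
  show ?thesis
  proof (cases "a = -1")
    case True
    have "{-1..<0::int} = {-1}" by auto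
    then show ?thesis using True by (simp add: P_def)
  next
    case F2: False
    have "{a..<0} = insert a {a+1..<0}" using False by auto
    then show ?thesis using False F2 by (simp add: P_def)
  qed
qed

lemma P_zero: "P g 0 = 0" by (simp add: P_def)

lemma P_tele: "P (\<lambda>k. g (k + 1) - g k) b = g b - g 0"
proof (induction b rule: int_induct[where k=0])
  case base then show ?case by (simp add: P_zero)
next
  case (step1 i) then show ?case using P_step[of "\<lambda>k. g (k + 1) - g k" i] by simp
next
  case (step2 i) then show ?case using P_step[of "\<lambda>k. g (k + 1) - g k" "i - 1"] by simp
qed

lemma P_diff: "P (\<lambda>k. f k - h k) b = P f b - P h b"
  by (simp add: P_def sum_subtractf)

lemma red_add: "L \<ge> 1 \<Longrightarrow> inD L \<eta> (red L u + v) i = inD L \<eta> (u + v) i"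
  by (cases u; cases v) (simp add: inD_def red_def mod_add_left_eq)

lemma const_int2:
  fixes D :: "int \<times> int \<Rightarrow> real"
  assumes "\<And>u. D (u + (1,0)) = D u" "\<And>u. D (u + (0,1)) = D u"
  shows "D (a, b) = D (0, 0)"
proof -
  have r: "D (a, b) = D (0, b)" for a b
  proof (induction a rule: int_induct[where k=0])
    case base then show ?case by simp
  next
    case (step1 i) then show ?case using assms(1)[of "(i,b)"] by simp
  next
    case (step2 i) then show ?case using assms(1)[of "(i - 1,b)"] by simp
  qed
  have c: "D (0, b) = D (0, 0)" for b
  proof (induction b rule: int_induct[where k=0])
    case base then show ?case by simp
  next
    case (step1 i) then show ?case using assms(2)[of "(0,i)"] by simp
  next
    case (step2 i) then show ?case using assms(2)[of "(0,i - 1)"] by simp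
  qed
  show ?thesis using r[of a b] c[of b] by simp
qed

theorem lemma1:
  fixes L :: int and r1 r2 :: real
    and \<eta> :: "((int \<times> int) \<times> nat) set" and u :: "int \<times> int"
  assumes "L \<ge> 1"
    and "r1 > 0" and "r2 > 0" and "r1 + r2 < 1"
    and "\<exists>n::nat. real_of_int L * r1 = real n"
    and "\<exists>n::nat. real_of_int L * r2 = real n"
    and "\<eta> \<in> Omega L r1 r2"
    and "u \<in> {0..<L} \<times> {0..<L}"
  shows "eps L \<eta> u = 1/2 * (Ffun L \<eta> (u + e 3) - Ffun L \<eta> u + lap (height L r1 r2 \<eta>) u)"
proof -
  define B :: "int \<times> int \<Rightarrow> nat \<Rightarrow> real" where "B v i = of_bool (inD L \<eta> v i)" for v i
  have Lp: "L \<ge> 1" by fact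
  have box: "\<forall>v \<in> {0..<L} \<times> {0..<L}.
        of_bool (inD L \<eta> v 1) + of_bool (inD L \<eta> (v + e 1) 2)
          + of_bool (inD L \<eta> (v + e 1 + e 2) 3) = (1::nat) \<and>
        of_bool (inD L \<eta> v 2) + of_bool (inD L \<eta> (v + e 2) 1)
          + of_bool (inD L \<eta> (v + e 1 + e 2) 3) = (1::nat)"
    using assms(7) by (simp add: Omega_def)
  have triN: "of_bool (inD L \<eta> v 1) + of_bool (inD L \<eta> (v + e 1) 2)
          + of_bool (inD L \<eta> (v + e 1 + e 2) 3) = (1::nat) \<and>
        of_bool (inD L \<eta> v 2) + of_bool (inD L \<eta> (v + e 2) 1)
          + of_bool (inD L \<eta> (v + e 1 + e 2) 3) = (1::nat)" for v
  proof -
    have inb: "red L v \<in> {0..<L} \<times> {0..<L}" using Lp by (cases v) (simp add: red_def)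
    have x: "inD L \<eta> (red L v + w) i = inD L \<eta> (v + w) i" for w i using red_add[OF Lp] .
    have y: "inD L \<eta> (red L v) i = inD L \<eta> v i" for i using x[of 0] by simp
    have z: "red L v + e 1 + e 2 = red L v + (e 1 + e 2)" "v + e 1 + e 2 = v + (e 1 + e 2)"
      by (simp_all add: add.assoc)
    show ?thesis using box[rule_format, OF inb] unfolding z by (simp add: x y)
  qed
  have triA: "B v 1 + B (v + e 1) 2 + B (v + e 1 + e 2) 3 = (1::real)"
    and triB: "B v 2 + B (v + e 2) 1 + B (v + e 1 + e 2) 3 = (1::real)" for v
  proof -
    from triN[of v] have "real (of_bool (inD L \<eta> v 1) + of_bool (inD L \<eta> (v + e 1) 2)
          + of_bool (inD L \<eta> (v + e 1 + e 2) 3)) = 1" by simp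
    then show "B v 1 + B (v + e 1) 2 + B (v + e 1 + e 2) 3 = (1::real)"
      unfolding B_def by (simp only: of_nat_add of_nat_of_bool)
    from triN[of v] have "real (of_bool (inD L \<eta> v 2) + of_bool (inD L \<eta> (v + e 2) 1)
          + of_bool (inD L \<eta> (v + e 1 + e 2) 3)) = 1" by simp
    then show "B v 2 + B (v + e 2) 1 + B (v + e 1 + e 2) 3 = (1::real)"
      unfolding B_def by (simp only: of_nat_add of_nat_of_bool)
  qed
  have e1: "e 1 = (1,0)" and e2: "e 2 = (0,1)" and e3: "e 3 = (-1,-1)" by (simp_all add: e_def)
  define d1 where "d1 v = - r1 + B v 1" for v
  define d2 where "d2 v = - r2 + B v 2" for v
  define H0 where "H0 v = P (\<lambda>k. d1 (k, 0)) (fst v) + P (\<lambda>k. d2 (fst v, k)) (snd v)" for v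
  have sq: "d2 (a + 1, k) - d2 (a, k) = d1 (a, k + 1) - d1 (a, k)" for a k
    using triA[of "(a,k)"] triB[of "(a,k)"] by (simp add: d1_def d2_def e_def)
  have st1: "H0 ((a,b) + (1,0)) - H0 (a,b) = d1 (a,b)" for a b
  proof -
    have "P (\<lambda>k. d2 (a + 1, k)) b - P (\<lambda>k. d2 (a, k)) b = P (\<lambda>k. d1 (a, k + 1) - d1 (a, k)) b"
      using P_diff[of "\<lambda>k. d2 (a + 1, k)" "\<lambda>k. d2 (a, k)" b] sq by simp
    also have "\<dots> = d1 (a, b) - d1 (a, 0)" by (rule P_tele)
    finally show ?thesis using P_step[of "\<lambda>k. d1 (k, 0)" a] by (simp add: H0_def)
  qed
  have st2: "H0 ((a,b) + (0,1)) - H0 (a,b) = d2 (a,b)" for a b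
    using P_step[of "\<lambda>k. d2 (a, k)" b] by (simp add: H0_def)
  have st3: "H0 ((a,b) + (-1,-1)) - H0 (a,b) = -(1 - r1 - r2) + B (a,b) 3" for a b
  proof -
    have h1: "H0 (a, b) - H0 (a, b - 1) = d2 (a, b - 1)" using st2[of a "b - 1"] by simp
    have h2: "H0 (a, b - 1) - H0 (a - 1, b - 1) = d1 (a - 1, b - 1)" using st1[of "a - 1" "b - 1"] by simp
    have t: "B (a - 1, b - 1) 1 + B (a, b - 1) 2 + B (a, b) 3 = 1"
      using triA[of "(a - 1, b - 1)"] by (simp add: e_def)
    show ?thesis using h1 h2 t by (simp add: d1_def d2_def)
  qed
  define Q where "Q H \<longleftrightarrow> H (0, 0) = 0 \<and>
     (\<forall>u i. i \<in> {1, 2, 3} \<longrightarrow>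
        H (u + e i) - H u = - rho r1 r2 i + of_bool (inD L \<eta> u i))" for H :: "int \<times> int \<Rightarrow> real"
  have QH0: "Q H0"
    unfolding Q_def
  proof (intro conjI allI impI)
    show "H0 (0,0) = 0" by (simp add: H0_def P_zero)
    fix v :: "int \<times> int" and i :: nat assume "i \<in> {1,2,3}"
    then show "H0 (v + e i) - H0 v = - rho r1 r2 i + of_bool (inD L \<eta> v i)"
      using st1[of "fst v" "snd v"] st2[of "fst v" "snd v"] st3[of "fst v" "snd v"]
      by (auto simp: e_def rho_def d1_def d2_def B_def)
  qed
  have uniq: "H = H0" if "Q H" for H
  proof
    fix w
    define D where "D v = H v - H0 v" for v
    have qa: "H (v + e i) - H v = - rho r1 r2 i + of_bool (inD L \<eta> v i)" if "i \<in> {1,2,3}" for v i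
      using \<open>Q H\<close> that unfolding Q_def by blast
    have qb: "H0 (v + e i) - H0 v = - rho r1 r2 i + of_bool (inD L \<eta> v i)" if "i \<in> {1,2,3}" for v i
      using QH0 that unfolding Q_def by blast
    have a1: "D (v + (1,0)) = D v" for v
      using qa[of 1 v] qb[of 1 v] unfolding D_def e1 by simp
    have a2: "D (v + (0,1)) = D v" for v
      using qa[of 2 v] qb[of 2 v] unfolding D_def e2 by simp
    have "D w = D (0,0)" using const_int2[of D, OF a1 a2] by (cases w) simp
    then show "H w = H0 w" using that QH0 by (simp add: D_def Q_def)
  qed
  have hH: "height L r1 r2 \<eta> = H0"
    unfolding height_def Q_def[symmetric] using QH0 uniq by (rule the_equality)
  obtain a b where ub: "u = (a,b)" by (cases u)
  have lapv: "lap H0 u = B u 1 - B (u - e 1) 1 + B u 2 - B (u - e 2) 2"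
  proof -
    have "H0 (a + 1, b) - H0 (a, b) = d1 (a,b)" using st1 by simp
    moreover have "H0 (a, b) - H0 (a - 1, b) = d1 (a - 1,b)" using st1[of "a - 1" b] by simp
    moreover have "H0 (a, b + 1) - H0 (a, b) = d2 (a,b)" using st2 by simp
    moreover have "H0 (a, b) - H0 (a, b - 1) = d2 (a,b - 1)" using st2[of a "b - 1"] by simp
    ultimately show ?thesis
      by (simp add: lap_def ub e_def d1_def d2_def algebra_simps)
  qed
  have rel: "B (u + e 3) 1 - B (u + e 3) 2 = B (u - e 1) 1 - B (u - e 2) 2"
    using triA[of "(a - 1, b - 1)"] triB[of "(a - 1, b - 1)"] by (simp add: ub e_def)
  have Fv: "Ffun L \<eta> v = \<bar>B v 1 - B v 2\<bar>" for v by (simp add: Ffun_def B_def)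
  have epsv: "eps L \<eta> u = B u 1 * B u 2 - B (u - e 1) 1 * B (u - e 2) 2"
    by (simp add: eps_def B_def)
  have bool: "\<And>x::real. x = 0 \<or> x = 1 \<Longrightarrow> True" by simp
  have b01: "B v i = 0 \<or> B v i = 1" for v i by (simp add: B_def)
  show ?thesis unfolding hH lapv epsv Fv rel
    using b01[of u 1] b01[of u 2] b01[of "u - e 1" 1] b01[of "u - e 2" 2]
    by auto
qed

end
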